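(* Let $d\ge1$ and $L\ge2$ be integers, $\Phi\in\mathbb{R}^{d\times d}$, and $W_1,\dots,W_L\in\mathbb{R}^{d\times d}$, with $\mathcal{R}=\tfrac12\|W_{L:1}-\Phi\|_F^2$. Suppose $\|W_l\|_2\le\alpha$ for $l=1,\dots,L-1$ and $\|W_L\|_2\le\beta$, where $\alpha,\beta\ge0$ and, for some $\phi>0$, $1\le\alpha^{2(L-1)}<L\phi^2$ and $\alpha^{2(L-1)}\beta^2<2\phi^2$. Then $$\|\nabla_l\mathcal{R}\|_F^2\le4\phi^2\mathcal{R}\quad(l=1,\dots,L-1),\qquad\|\nabla_L\mathcal{R}\|_F^2\le2L\phi^2\mathcal{R}.$$
   Context: For $l_2\ge l_1$ write $W_{l_2:l_1}=W_{l_2}\cdots W_{l_1}$, empty products being the identity $I$. $\nabla_l\mathcal{R}=W_{L:l+1}^\intercal(W_{L:1}-\Phi)W_{l-1:1}^\intercal$ is the gradient of $\mathcal{R}(W_1,\dots,W_L)=\tfrac12\|W_L\cdots W_1-\Phi\|_F^2$ with respect to $W_l$. $\|\cdot\|_2$ is the spectral norm and $\|\cdot\|_F$ the Frobenius norm. *)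

theory Defs
  imports "HOL-Analysis.Analysis"
begin

text \<open>Ordered product W_hi * W_(hi-1) * ... * W_lo; identity if hi < lo.\<close>
definition mprod :: "(nat \<Rightarrow> real^'n^'n) \<Rightarrow> nat \<Rightarrow> nat \<Rightarrow> real^'n^'n" where
  "mprod W hi lo = foldr (\<lambda>l M. W l ** M) (rev [lo..<Suc hi]) (mat 1)"

text \<open>Frobenius norm.\<close>
definition frob_norm :: "real^'n^'m \<Rightarrow> real" where
  "frob_norm A = sqrt (\<Sum>i\<in>UNIV. \<Sum>j\<in>UNIV. (A $ i $ j)^2)"

text \<open>Spectral norm (operator norm induced by the Euclidean norm).\<close>
definition spec_norm :: "real^'n^'m \<Rightarrow> real" where
  "spec_norm A = onorm (\<lambda>x. A *v x)"

definition risk :: "(nat \<Rightarrow> real^'n^'n) \<Rightarrow> real^'n^'n \<Rightarrow> nat \<Rightarrow> real" where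
  "risk W Phi L = (1/2) * (frob_norm (mprod W L 1 - Phi))^2"

definition grad :: "(nat \<Rightarrow> real^'n^'n) \<Rightarrow> real^'n^'n \<Rightarrow> nat \<Rightarrow> nat \<Rightarrow> real^'n^'n" where
  "grad W Phi L l = transpose (mprod W L (l+1)) ** (mprod W L 1 - Phi) ** transpose (mprod W (l-1) 1)"

end

theory Submission
  imports Defs
begin

definition bnd :: "real^'n^'n \<Rightarrow> real \<Rightarrow> bool" where
  "bnd A c \<longleftrightarrow> (\<forall>x. norm (A *v x) \<le> c * norm x)"

lemma bnd_spec: "spec_norm A \<le> c \<Longrightarrow> bnd A c"
  unfolding bnd_def spec_norm_def
proof
  fix x assume "onorm ((*v) A) \<le> c"
  have "norm (A *v x) \<le> onorm ((*v) A) * norm x"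
    using onorm[OF matrix_vector_mul_bounded_linear] by blast
  also have "\<dots> \<le> c * norm x" using \<open>onorm ((*v) A) \<le> c\<close> by (simp add: mult_right_mono)
  finally show "norm (A *v x) \<le> c * norm x" .
qed

lemma bnd_mult: "bnd A a \<Longrightarrow> bnd B b \<Longrightarrow> a \<ge> 0 \<Longrightarrow> bnd (A ** B) (a*b)"
  unfolding bnd_def
proof
  fix x assume A: "\<forall>x. norm (A *v x) \<le> a * norm x" and B: "\<forall>x. norm (B *v x) \<le> b * norm x" and a: "a \<ge> 0"
  have "norm ((A ** B) *v x) = norm (A *v (B *v x))" by (simp add: matrix_vector_mul_assoc)
  also have "\<dots> \<le> a * norm (B *v x)" using A by blast
  also have "\<dots> \<le> a * (b * norm x)" using B a by (simp add: mult_left_mono)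
  finally show "norm ((A ** B) *v x) \<le> a * b * norm x" by simp
qed

lemma bnd_one: "bnd (mat 1) 1"
  unfolding bnd_def by simp

lemma bnd_transpose: "bnd A c \<Longrightarrow> c \<ge> 0 \<Longrightarrow> bnd (transpose A) c"
  unfolding bnd_def
proof
  fix y assume A: "\<forall>x. norm (A *v x) \<le> c * norm x" and c: "c \<ge> 0"
  let ?z = "y v* A"
  have "norm ?z ^ 2 = inner ?z ?z" by (simp add: power2_norm_eq_inner)
  also have "\<dots> = inner y (A *v ?z)" by (rule dot_lmul_matrix)
  also have "\<dots> \<le> norm y * norm (A *v ?z)" by (rule norm_cauchy_schwarz)
  also have "\<dots> \<le> norm y * (c * norm ?z)" using A by (simp add: mult_left_mono)
  finally have h: "norm ?z * norm ?z \<le> (c * norm y) * norm ?z" by (simp add: power2_eq_square algebra_simps)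
  have "norm ?z \<le> c * norm y"
  proof (cases "norm ?z = 0")
    case True
    have "0 \<le> c * norm y" using c by simp
    then show ?thesis using True by simp
  next
    case False
    then have "norm ?z > 0" by simp
    then show ?thesis using h by (meson mult_le_cancel_right_pos)
  qed
  then show "norm (transpose A *v y) \<le> c * norm y" by simp
qed

lemma norm_sq_vec: "norm (v::real^'n) ^ 2 = (\<Sum>j\<in>UNIV. (v $ j)^2)"
  by (simp add: norm_vec_def L2_set_def sum_nonneg)

lemma frob_sq: "frob_norm (M::real^'n^'m) ^ 2 = (\<Sum>i\<in>UNIV. norm (M $ i) ^ 2)"
  by (simp add: frob_norm_def norm_sq_vec sum_nonneg)

lemma frob_nonneg: "frob_norm M \<ge> 0"
  by (simp add: frob_norm_def sum_nonneg)

lemma frob_transpose: "frob_norm (transpose (M::real^'n^'m)) = frob_norm M"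
proof -
  have "(\<Sum>i\<in>UNIV. \<Sum>j\<in>UNIV. (transpose M $ i $ j)^2) = (\<Sum>i\<in>UNIV. \<Sum>j\<in>UNIV. (M $ j $ i)^2)"
    by (simp add: transpose_def)
  also have "\<dots> = (\<Sum>i\<in>UNIV. \<Sum>j\<in>UNIV. (M $ i $ j)^2)"
    by (rule sum.swap)
  finally show ?thesis unfolding frob_norm_def by simp
qed

lemma row_mult: "((M::real^'n^'m) ** A) $ i = transpose A *v (M $ i)"
  by (simp add: vec_eq_iff matrix_matrix_mult_def matrix_vector_mult_def transpose_def) (simp add: mult.commute)

lemma frob_mult_right:
  assumes "bnd (transpose A) c" "c \<ge> 0"
  shows "frob_norm ((M::real^'n^'m) ** A) \<le> frob_norm M * c"
proof -
  have "frob_norm (M ** A) ^ 2 = (\<Sum>i\<in>UNIV. norm (transpose A *v (M $ i)) ^ 2)"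
    by (simp add: frob_sq row_mult)
  also have "\<dots> \<le> (\<Sum>i\<in>UNIV. (c * norm (M $ i)) ^ 2)"
    apply (rule sum_mono)
    apply (rule power_mono)
    using assms unfolding bnd_def by auto
  also have "\<dots> = (frob_norm M * c) ^ 2"
    by (simp add: frob_sq power_mult_distrib sum_distrib_left[symmetric] algebra_simps)
  finally show ?thesis
    using frob_nonneg[of M] assms(2) by (meson mult_nonneg_nonneg power2_le_imp_le)
qed

lemma frob_mult_left:
  assumes "bnd A c" "c \<ge> 0"
  shows "frob_norm (A ** (M::real^'m^'n)) \<le> c * frob_norm M"
proof -
  have "frob_norm (A ** M) = frob_norm (transpose M ** transpose A)"
    by (metis frob_transpose matrix_transpose_mul)
  also have "\<dots> \<le> frob_norm (transpose M) * c"
    by (rule frob_mult_right) (use assms in auto)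
  finally show ?thesis by (simp add: frob_transpose mult.commute)
qed

lemma mprod_empty: "hi < lo \<Longrightarrow> mprod W hi lo = mat 1"
  by (simp add: mprod_def)

lemma mprod_Suc: "lo \<le> Suc h \<Longrightarrow> mprod W (Suc h) lo = W (Suc h) ** mprod W h lo"
  by (simp add: mprod_def)

lemma bnd_prod:
  assumes W: "\<And>l. 1 \<le> l \<Longrightarrow> l \<le> L - 1 \<Longrightarrow> bnd (W l) \<alpha>" and a: "\<alpha> \<ge> 0"
  shows "1 \<le> lo \<Longrightarrow> lo \<le> hi + 1 \<Longrightarrow> hi \<le> L - 1 \<Longrightarrow> bnd (mprod W hi lo) (\<alpha> ^ (hi + 1 - lo))"
proof (induction hi)
  case 0
  then show ?case by (simp add: mprod_empty bnd_one)
next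
  case (Suc h)
  show ?case
  proof (cases "lo = Suc h + 1")
    case True
    then show ?thesis by (simp add: mprod_empty bnd_one)
  next
    case False
    then have lo: "lo \<le> Suc h" using Suc.prems by simp
    have IH: "bnd (mprod W h lo) (\<alpha> ^ (h + 1 - lo))" using Suc lo by simp
    have "bnd (W (Suc h) ** mprod W h lo) (\<alpha> * \<alpha> ^ (h + 1 - lo))"
      by (rule bnd_mult[OF W IH a]) (use Suc.prems in auto)
    moreover have "\<alpha> * \<alpha> ^ (h + 1 - lo) = \<alpha> ^ (Suc h + 1 - lo)"
      using lo by (simp add: Suc_diff_le)
    ultimately show ?thesis using lo by (simp add: mprod_Suc)
  qed
qed

theorem lemma8:
  fixes W :: "nat \<Rightarrow> real^'n^'n" and Phi :: "real^'n^'n"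
    and L :: nat and \<alpha> \<beta> \<phi> :: real
  assumes "L \<ge> 2"
    and "\<And>l. 1 \<le> l \<Longrightarrow> l \<le> L - 1 \<Longrightarrow> spec_norm (W l) \<le> \<alpha>"
    and "spec_norm (W L) \<le> \<beta>"
    and "\<alpha> \<ge> 0" and "\<beta> \<ge> 0" and "\<phi> > 0"
    and "1 \<le> \<alpha> ^ (2*(L-1))" and "\<alpha> ^ (2*(L-1)) < real L * \<phi>^2"
    and "\<alpha> ^ (2*(L-1)) * \<beta>^2 < 2 * \<phi>^2"
  shows "(\<forall>l. 1 \<le> l \<and> l \<le> L - 1 \<longrightarrow> (frob_norm (grad W Phi L l))^2 \<le> 4 * \<phi>^2 * risk W Phi L)
       \<and> (frob_norm (grad W Phi L L))^2 \<le> 2 * real L * \<phi>^2 * risk W Phi L"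
proof -
  note L2 = assms(1) and a0 = assms(4) and b0 = assms(5)
  have Wb: "\<And>l. 1 \<le> l \<Longrightarrow> l \<le> L - 1 \<Longrightarrow> bnd (W l) \<alpha>" using assms(2) bnd_spec by blast
  have WL: "bnd (W L) \<beta>" using assms(3) bnd_spec by blast
  define E where "E = mprod W L 1 - Phi"
  define F where "F = frob_norm E"
  have F0: "F \<ge> 0" unfolding F_def by (rule frob_nonneg)
  have R: "risk W Phi L = F^2 / 2" unfolding risk_def F_def E_def by simp
  have a1: "\<alpha> \<ge> 1"
  proof (rule ccontr)
    assume "\<not> 1 \<le> \<alpha>"
    then have "\<alpha> < 1" by simp
    have k: "2*(L-1) = Suc (2*(L-1)-1)" using L2 by simp
    have "\<alpha> ^ (2*(L-1)-1) \<le> 1" using a0 \<open>\<alpha> < 1\<close> by (intro power_le_one) auto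
    then have "\<alpha> * \<alpha> ^ (2*(L-1)-1) \<le> \<alpha> * 1" using a0 by (intro mult_left_mono) auto
    then have "\<alpha> ^ (2*(L-1)) < 1" using \<open>\<alpha> < 1\<close> by (subst k) simp
    then show False using assms(7) by simp
  qed
  have QB: "\<And>l. 1 \<le> l \<Longrightarrow> l \<le> L \<Longrightarrow> bnd (mprod W (l-1) 1) (\<alpha> ^ (l-1))"
  proof -
    fix l :: nat assume "1 \<le> l" "l \<le> L"
    then show "bnd (mprod W (l-1) 1) (\<alpha> ^ (l-1))"
      using bnd_prod[OF Wb a0, where lo=1 and hi="l-1"] by simp
  qed
  have gen: "frob_norm (grad W Phi L l) \<le> cP * cQ * F"
    if "bnd (mprod W L (l+1)) cP" "bnd (mprod W (l-1) 1) cQ" "cP \<ge> 0" "cQ \<ge> 0" for l cP cQ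
  proof -
    have "frob_norm (grad W Phi L l) \<le> frob_norm (transpose (mprod W L (l+1)) ** E) * cQ"
      unfolding grad_def E_def[symmetric]
      by (rule frob_mult_right) (use that in simp_all)
    also have "\<dots> \<le> (cP * F) * cQ"
      unfolding F_def
      by (rule mult_right_mono[OF frob_mult_left]) (use that bnd_transpose in auto)
    finally show ?thesis by (simp add: algebra_simps)
  qed
  have part1: "(frob_norm (grad W Phi L l))^2 \<le> 4 * \<phi>^2 * risk W Phi L"
    if l: "1 \<le> l" "l \<le> L - 1" for l
  proof -
    have LS: "L = Suc (L-1)" using L2 by simp
    have "bnd (mprod W (L-1) (l+1)) (\<alpha> ^ (L-1+1-(l+1)))"
      using bnd_prod[OF Wb a0, where lo="l+1" and hi="L-1"] l by simp
    then have "bnd (W L ** mprod W (L-1) (l+1)) (\<beta> * \<alpha> ^ (L-1+1-(l+1)))"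
      using bnd_mult[OF WL _ b0] by blast
    then have P: "bnd (mprod W L (l+1)) (\<beta> * \<alpha> ^ (L-1-l))"
    proof -
      have e: "L-1+1-(l+1) = L-1-l" by simp
      have "mprod W (Suc (L-1)) (l+1) = W (Suc (L-1)) ** mprod W (L-1) (l+1)"
        by (rule mprod_Suc) (use l L2 in simp)
      then have "mprod W L (l+1) = W L ** mprod W (L-1) (l+1)" using LS by simp
      then show ?thesis using \<open>bnd (W L ** mprod W (L-1) (l+1)) _\<close> e by simp
    qed
    have Q: "bnd (mprod W (l-1) 1) (\<alpha> ^ (l-1))" using QB l by simp
    have g: "frob_norm (grad W Phi L l) \<le> (\<beta> * \<alpha> ^ (L-1-l)) * \<alpha> ^ (l-1) * F"
      by (rule gen[OF P Q]) (use a0 b0 in simp_all)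
    have "(\<beta> * \<alpha> ^ (L-1-l)) * \<alpha> ^ (l-1) = \<beta> * \<alpha> ^ (L-2)"
    proof -
      have "L-1-l + (l-1) = L-2" using l by simp
      then show ?thesis by (metis mult.assoc power_add)
    qed
    then have g2: "frob_norm (grad W Phi L l) \<le> \<beta> * \<alpha> ^ (L-2) * F" using g by (simp only:)
    have "(frob_norm (grad W Phi L l))^2 \<le> (\<beta> * \<alpha> ^ (L-2) * F)^2"
      using g2 frob_nonneg by (intro power_mono) auto
    also have "\<dots> = (\<alpha> ^ (2*(L-2)) * \<beta>^2) * F^2"
      by (simp add: power_mult_distrib power_mult[symmetric] algebra_simps)
    also have "\<dots> \<le> (\<alpha> ^ (2*(L-1)) * \<beta>^2) * F^2"
      using a1 by (intro mult_right_mono power_increasing) auto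
    also have "\<dots> \<le> (2 * \<phi>^2) * F^2"
      using assms(9) by (intro mult_right_mono) auto
    also have "\<dots> = 4 * \<phi>^2 * risk W Phi L" using R by simp
    finally show ?thesis .
  qed
  have part2: "(frob_norm (grad W Phi L L))^2 \<le> 2 * real L * \<phi>^2 * risk W Phi L"
  proof -
    have P: "bnd (mprod W L (L+1)) 1" by (simp add: mprod_empty bnd_one)
    have Q: "bnd (mprod W (L-1) 1) (\<alpha> ^ (L-1))" using QB L2 by simp
    have g: "frob_norm (grad W Phi L L) \<le> 1 * \<alpha> ^ (L-1) * F"
      by (rule gen[OF P Q]) (use a0 in simp_all)
    have "(frob_norm (grad W Phi L L))^2 \<le> (\<alpha> ^ (L-1) * F)^2"
      using g frob_nonneg by (intro power_mono) auto
    also have "\<dots> = \<alpha> ^ (2*(L-1)) * F^2"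
      by (simp add: power_mult_distrib power_mult[symmetric] algebra_simps)
    also have "\<dots> \<le> (real L * \<phi>^2) * F^2"
      using assms(8) by (intro mult_right_mono) auto
    also have "\<dots> = 2 * real L * \<phi>^2 * risk W Phi L" using R by simp
    finally show ?thesis .
  qed
  show ?thesis using part1 part2 by blast
qed

end
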